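(* Assume binary treatments $A_m\in\{0,1\}$, coarse consistency, and $0<P(A_m=1\mid\bar L_m,T\ge m)<1$ almost surely on $\{T\ge m\}$ for every $m$. Let $c(\bar l_m,k)$ be the true bias function defined in the context. Then for all $0\le m<k\le K$, almost surely on $\{T\ge m\}$, $$E[H^{c,a}_{mk}(\gamma^{c*})-H^c_{m,k-1}(\gamma^{c*})\mid\bar L_m,T\ge m,A_m]=E[H^{c,a}_{mk}(\gamma^{c*})-H^c_{m,k-1}(\gamma^{c*})\mid\bar L_m,T\ge m].$$ That is, the left-hand conditional expectation does not depend on $A_m$.
   Context: **Data.** Subjects are observed at times $0,\dots,K$. At each time $m$ the data $(Z_m,Y_m,A_m)$ are collected in that temporal order: - $A_m\in\{0,1\}$ is the treatment, with baseline level $0$; - $Y_m$ is the outcome; - $Z_m$ are covariates. For a time-varying variable $X$, write $\bar X_m=(X_0,\dots,X_m)$; negative-index variables are null. Define $\bar L_m=(\bar Z_m,\bar Y_{m-1},\bar A_{m-1})$. **Treatment initiation.** $T=\min\{m:A_m\neq0\}\in\{0,\dots,K,\infty\}$. **Counterfactuals.** $Y_k(m,1)$ is the counterfactual outcome at time $k$ under first initiating treatment at time $m$. $Y_k(\infty)$ is the counterfactual under never initiating. Also $Y_k(m,1)=Y_k(\infty)$ for $k\le m$. **Coarse consistency.** $Y_k=Y_k(T,A_T)$ on $\{T<k\}$ and $Y_k=Y_k(\infty)$ on $\{T\ge k\}$. **Coarse blip functions.** $$\gamma^{c*}_{mk}(\bar l_m,a_m)\equiv E[Y_k(m,a_m)-Y_k(\infty)\mid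 T=m,A_m=a_m,\bar L_m=\bar l_m].$$ **Blipped-down outcomes.** - $H^c_{mk}(\gamma^c)\equiv Y_k-\sum_{j=m}^{k-1}\gamma^c_{jk}(\bar L_j,A_j)\mathbb 1\{T=j\}$ for $k>m$; - $H^c_{mm}(\gamma^c)\equiv Y_m$. **Bias function.** $$c(\bar l_m,k)\equiv E[Y_k(\infty)-Y_{k-1}(\infty)\mid\bar L_m=\bar l_m,T\ge m,A_m=1]-E[Y_k(\infty)-Y_{k-1}(\infty)\mid\bar L_m=\bar l_m,T\ge m,A_m=0].$$ **Bias-adjusted blipped-down outcome.** $$H^{c,a}_{mk}(\gamma^c)\equiv H^c_{mk}(\gamma^c)-\sum_{j=m}^{k}\Pr(1-A_j\mid\bar L_j,T\ge j)(2A_j-1)\,c(\bar L_j,k)\,\mathbb 1\{T\ge j\},$$ where $\Pr(1-A_j\mid\bar L_j,T\ge j)$ denotes $P(A_j=1-a\mid\bar L_j,T\ge j)$ evaluated at $a=A_j$. *)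

theory Defs
  imports "HOL-Probability.Probability"
begin

definition T_init :: "nat \<Rightarrow> (nat \<Rightarrow> 'a \<Rightarrow> real) \<Rightarrow> 'a \<Rightarrow> enat" where
  "T_init K A x = (if \<exists>m\<le>K. A m x \<noteq> 0 then enat (LEAST m. A m x \<noteq> 0) else \<infinity>)"

definition gen_by :: "'a measure \<Rightarrow> ('a \<Rightarrow> 'b) \<Rightarrow> 'b measure \<Rightarrow> 'a set set" where
  "gen_by M X N = {X -` B \<inter> space M | B. B \<in> sets N}"

(* sigma-algebra generated by Lbar_m = (Zbar_m, Ybar_{m-1}, Abar_{m-1}) *)
definition L_sigma :: "'a measure \<Rightarrow> 'b measure \<Rightarrow> (nat \<Rightarrow> 'a \<Rightarrow> 'b) \<Rightarrow> (nat \<Rightarrow> 'a \<Rightarrow> real)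
    \<Rightarrow> (nat \<Rightarrow> 'a \<Rightarrow> real) \<Rightarrow> nat \<Rightarrow> 'a measure" where
  "L_sigma M MZ Z Y A m = sigma (space M)
     ((\<Union>j\<in>{..m}. gen_by M (Z j) MZ) \<union> (\<Union>j\<in>{..<m}. gen_by M (Y j) borel)
      \<union> (\<Union>j\<in>{..<m}. gen_by M (A j) borel))"

definition LA_sigma :: "'a measure \<Rightarrow> 'b measure \<Rightarrow> (nat \<Rightarrow> 'a \<Rightarrow> 'b) \<Rightarrow> (nat \<Rightarrow> 'a \<Rightarrow> real)
    \<Rightarrow> (nat \<Rightarrow> 'a \<Rightarrow> real) \<Rightarrow> nat \<Rightarrow> 'a measure" where
  "LA_sigma M MZ Z Y A m = sigma (space M)
     ((\<Union>j\<in>{..m}. gen_by M (Z j) MZ) \<union> (\<Union>j\<in>{..<m}. gen_by M (Y j) borel)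
      \<union> (\<Union>j\<in>{..m}. gen_by M (A j) borel))"

(* E[X | F, B] evaluated at a point x of B: the elementary conditional expectation given
   the sigma-algebra F together with the event B, i.e. E[X 1_B | F] / E[1_B | F]. *)
definition cond_exp_given :: "'a measure \<Rightarrow> 'a measure \<Rightarrow> 'a set \<Rightarrow> ('a \<Rightarrow> real) \<Rightarrow> 'a \<Rightarrow> real" where
  "cond_exp_given M F B X x =
     real_cond_exp M F (\<lambda>y. indicator B y * X y) x / real_cond_exp M F (indicator B) x"

(* Blipped-down outcome H^c_{mk}(gamma); gam j k is the random variable gamma_{jk}(Lbar_j, A_j). *)
definition Hc :: "(nat \<Rightarrow> 'a \<Rightarrow> real) \<Rightarrow> ('a \<Rightarrow> enat) \<Rightarrow> (nat \<Rightarrow> nat \<Rightarrow> 'a \<Rightarrow> real)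
    \<Rightarrow> nat \<Rightarrow> nat \<Rightarrow> 'a \<Rightarrow> real" where
  "Hc Y T gam m k x = (if m < k
      then Y k x - (\<Sum>j\<in>{m..<k}. gam j k x * indicator {y. T y = enat j} x)
      else Y m x)"

(* Pr(1 - A_j | Lbar_j, T >= j) = P(A_j = 1 - a | Lbar_j, T >= j) evaluated at a = A_j *)
definition pr_flip :: "'a measure \<Rightarrow> (nat \<Rightarrow> 'a measure) \<Rightarrow> ('a \<Rightarrow> enat) \<Rightarrow> (nat \<Rightarrow> 'a \<Rightarrow> real)
    \<Rightarrow> nat \<Rightarrow> 'a \<Rightarrow> real" where
  "pr_flip M LS T A j x = cond_exp_given M (LS j) {y \<in> space M. enat j \<le> T y}
      (indicator {y \<in> space M. A j y = 1 - A j x}) x"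

(* Bias-adjusted blipped-down outcome H^{c,a}_{mk}(gamma); cb j k is the random variable c(Lbar_j, k). *)
definition Hca :: "'a measure \<Rightarrow> (nat \<Rightarrow> 'a measure) \<Rightarrow> (nat \<Rightarrow> 'a \<Rightarrow> real) \<Rightarrow> ('a \<Rightarrow> enat)
    \<Rightarrow> (nat \<Rightarrow> 'a \<Rightarrow> real) \<Rightarrow> (nat \<Rightarrow> nat \<Rightarrow> 'a \<Rightarrow> real) \<Rightarrow> (nat \<Rightarrow> nat \<Rightarrow> 'a \<Rightarrow> real)
    \<Rightarrow> nat \<Rightarrow> nat \<Rightarrow> 'a \<Rightarrow> real" where
  "Hca M LS Y T A gam cb m k x = Hc Y T gam m k x
      - (\<Sum>j\<in>{m..k}. pr_flip M LS T A j x * (2 * A j x - 1) * cb j k x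
                        * indicator {y. enat j \<le> T y} x)"

(* True coarse blip gamma*_{jk}(Lbar_j, A_j) = E[Y_k(j,A_j) - Y_k(inf) | T = j, A_j, Lbar_j];
   Ycf j k is the counterfactual Y_k(j,1) (binary treatment: A_T = 1). *)
definition blip_star :: "'a measure \<Rightarrow> (nat \<Rightarrow> 'a measure) \<Rightarrow> ('a \<Rightarrow> enat) \<Rightarrow> (nat \<Rightarrow> 'a \<Rightarrow> real)
    \<Rightarrow> (nat \<Rightarrow> nat \<Rightarrow> 'a \<Rightarrow> real) \<Rightarrow> (nat \<Rightarrow> 'a \<Rightarrow> real) \<Rightarrow> nat \<Rightarrow> nat \<Rightarrow> 'a \<Rightarrow> real" where
  "blip_star M LS T A Ycf Yinf j k x =
     cond_exp_given M (LS j) {y \<in> space M. T y = enat j \<and> A j y = 1} (\<lambda>y. Ycf j k y - Yinf k y) x"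

definition bias_star :: "'a measure \<Rightarrow> (nat \<Rightarrow> 'a measure) \<Rightarrow> ('a \<Rightarrow> enat) \<Rightarrow> (nat \<Rightarrow> 'a \<Rightarrow> real)
    \<Rightarrow> (nat \<Rightarrow> 'a \<Rightarrow> real) \<Rightarrow> nat \<Rightarrow> nat \<Rightarrow> 'a \<Rightarrow> real" where
  "bias_star M LS T A Yinf j k x =
     cond_exp_given M (LS j) {y \<in> space M. enat j \<le> T y \<and> A j y = 1} (\<lambda>y. Yinf k y - Yinf (k - 1) y) x
   - cond_exp_given M (LS j) {y \<in> space M. enat j \<le> T y \<and> A j y = 0} (\<lambda>y. Yinf k y - Yinf (k - 1) y) x"

definition Hc_star :: "'a measure \<Rightarrow> 'b measure \<Rightarrow> nat \<Rightarrow> (nat \<Rightarrow> 'a \<Rightarrow> 'b) \<Rightarrow> (nat \<Rightarrow> 'a \<Rightarrow> real)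
    \<Rightarrow> (nat \<Rightarrow> 'a \<Rightarrow> real) \<Rightarrow> (nat \<Rightarrow> nat \<Rightarrow> 'a \<Rightarrow> real) \<Rightarrow> (nat \<Rightarrow> 'a \<Rightarrow> real)
    \<Rightarrow> nat \<Rightarrow> nat \<Rightarrow> 'a \<Rightarrow> real" where
  "Hc_star M MZ K Z Y A Ycf Yinf m k =
     Hc Y (T_init K A) (blip_star M (L_sigma M MZ Z Y A) (T_init K A) A Ycf Yinf) m k"

definition Hca_star :: "'a measure \<Rightarrow> 'b measure \<Rightarrow> nat \<Rightarrow> (nat \<Rightarrow> 'a \<Rightarrow> 'b) \<Rightarrow> (nat \<Rightarrow> 'a \<Rightarrow> real)
    \<Rightarrow> (nat \<Rightarrow> 'a \<Rightarrow> real) \<Rightarrow> (nat \<Rightarrow> nat \<Rightarrow> 'a \<Rightarrow> real) \<Rightarrow> (nat \<Rightarrow> 'a \<Rightarrow> real)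
    \<Rightarrow> nat \<Rightarrow> nat \<Rightarrow> 'a \<Rightarrow> real" where
  "Hca_star M MZ K Z Y A Ycf Yinf m k =
     Hca M (L_sigma M MZ Z Y A) Y (T_init K A) A
       (blip_star M (L_sigma M MZ Z Y A) (T_init K A) A Ycf Yinf)
       (bias_star M (L_sigma M MZ Z Y A) (T_init K A) A Yinf) m k"

end

theory Submission
  imports Defs
begin


definition qf :: "'a measure \<Rightarrow> 'a measure \<Rightarrow> 'a set \<Rightarrow> 'a set \<Rightarrow> 'a \<Rightarrow> real" where
  "qf M F S B x = real_cond_exp M F (indicator B) x / real_cond_exp M F (indicator S) x"

lemma arith_qe1:
  fixes bB bS b' u :: real
  assumes "0 \<le> bB" "bB \<le> bS" "0 \<le> b'"
  shows "\<bar>bB / bS * (u / b')\<bar> * b' \<le> \<bar>u\<bar>"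
proof -
  have q: "\<bar>bB / bS\<bar> \<le> 1" using assms
    by (cases "bS = 0") (auto simp: abs_divide divide_le_eq_1)
  have "\<bar>bB / bS * (u / b')\<bar> * b' = \<bar>bB / bS\<bar> * (\<bar>u / b'\<bar> * b')" by (simp add: abs_mult)
  also have "\<dots> \<le> 1 * (\<bar>u / b'\<bar> * b')" using q assms(3) by (intro mult_right_mono) auto
  also have "\<dots> \<le> \<bar>u\<bar>" by (cases "b' = 0") (use assms(3) in \<open>auto simp: abs_divide\<close>)
  finally show ?thesis .
qed

lemma arith_qe2:
  fixes bB bS bc u :: real
  assumes "0 \<le> bc" "bc \<le> bS"
  shows "\<bar>bB / bS * (u / bB)\<bar> * bc \<le> \<bar>u\<bar>"
proof (cases "bB = 0 \<or> bS = 0")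
  case True then show ?thesis by auto
next
  case False
  then have "bB / bS * (u / bB) = u / bS" by simp
  moreover have "\<bar>u / bS\<bar> * bc \<le> \<bar>u / bS\<bar> * bS" using assms by (intro mult_left_mono) auto
  moreover have "\<bar>u / bS\<bar> * bS = \<bar>u\<bar>" using False assms by (simp add: abs_divide)
  ultimately show ?thesis by simp
qed

locale psub = prob_space M for M :: "'a measure" + fixes F :: "'a measure" assumes subalg: "subalgebra M F"

sublocale psub \<subseteq> sigma_finite_subalgebra M F
  using finite_measure_subalgebra_is_sigma_finite[of M F] subalg
  by (simp add: finite_measure_axioms finite_measure_subalgebra.intro finite_measure_subalgebra_axioms.intro)

context psub begin

lemma setsF_M: "C \<in> sets F \<Longrightarrow> C \<in> sets M"
  using subalg by (auto simp: subalgebra_def)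

lemma measF_M: "f \<in> borel_measurable F \<Longrightarrow> f \<in> borel_measurable M"
  by (rule measurable_from_subalg[OF subalg])

lemma int_ind: "B \<in> sets M \<Longrightarrow> integrable M (indicator B :: 'a \<Rightarrow> real)"
  by (simp add: integrable_real_indicator emeasure_finite less_top[symmetric])

lemma ce_ind_nn:
  assumes B[measurable]: "B \<in> sets M"
  shows "AE x in M. nn_cond_exp M F (\<lambda>x. ennreal (indicator B x)) x = ennreal (real_cond_exp M F (indicator B) x)"
proof -
  have 1: "AE x in M. nn_cond_exp M F (\<lambda>x. ennreal (indicator B x)) x \<le> nn_cond_exp M F (\<lambda>x. 1) x"
    by (rule nn_cond_exp_mono) (auto simp: indicator_def)
  have 2: "AE x in M. (\<lambda>x. 1::ennreal) x = nn_cond_exp M F (\<lambda>x. 1) x" by (rule nn_cond_exp_F_meas) simp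
  have 3: "AE x in M. (\<lambda>x. 0::ennreal) x = nn_cond_exp M F (\<lambda>x. 0) x" by (rule nn_cond_exp_F_meas) simp
  have e: "(\<lambda>x. ennreal (- indicator B x)) = (\<lambda>x. 0)" by (auto simp: indicator_def fun_eq_iff ennreal_neg)
  show ?thesis using 1 2 3
  proof eventually_elim
    case (elim x)
    then have "nn_cond_exp M F (\<lambda>x. ennreal (indicator B x)) x \<noteq> \<top>"
      by (metis ennreal_one_neq_top top_unique)
    then show ?case using elim by (simp add: real_cond_exp_def e less_top)
  qed
qed

lemma ce_ind_01:
  assumes B[measurable]: "B \<in> sets M"
  shows "AE x in M. 0 \<le> real_cond_exp M F (indicator B) x \<and> real_cond_exp M F (indicator B) x \<le> 1"
proof -
  have 1: "AE x in M. 0 \<le> real_cond_exp M F (indicator B) x"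
    by (rule real_cond_exp_pos) auto
  have 2: "AE x in M. real_cond_exp M F (indicator B) x \<le> real_cond_exp M F (\<lambda>x. 1) x"
    by (rule real_cond_exp_mono) (auto simp: indicator_def int_ind)
  have 3: "AE x in M. real_cond_exp M F (\<lambda>x. 1) x = 1"
    by (rule real_cond_exp_F_meas) auto
  show ?thesis using 1 2 3 by eventually_elim auto
qed

lemma ce_ind_mono:
  assumes [measurable]: "B \<in> sets M" "S \<in> sets M" and sub: "B \<subseteq> S"
  shows "AE x in M. real_cond_exp M F (indicator B) x \<le> real_cond_exp M F (indicator S) x"
  by (rule real_cond_exp_mono) (use sub in \<open>auto simp: indicator_def int_ind\<close>)

lemma RB:
  assumes B[measurable]: "B \<in> sets M" and f[measurable]: "f \<in> borel_measurable F"
    and u: "integrable M u"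
    and le: "AE x in M. \<bar>f x\<bar> * real_cond_exp M F (indicator B) x \<le> u x"
  shows "integrable M (\<lambda>x. f x * indicator B x)"
proof -
  have fM[measurable]: "f \<in> borel_measurable M" by (rule measF_M[OF f])
  have "(\<integral>\<^sup>+x. ennreal (norm (f x * indicator B x)) \<partial>M) = (\<integral>\<^sup>+x. ennreal \<bar>f x\<bar> * ennreal (indicator B x) \<partial>M)"
    by (intro nn_integral_cong) (auto simp: indicator_def)
  also have "\<dots> = (\<integral>\<^sup>+x. ennreal \<bar>f x\<bar> * nn_cond_exp M F (\<lambda>x. ennreal (indicator B x)) x \<partial>M)"
    by (rule nn_cond_exp_intg[symmetric]) auto
  also have "\<dots> = (\<integral>\<^sup>+x. ennreal (\<bar>f x\<bar> * real_cond_exp M F (indicator B) x) \<partial>M)"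
    using ce_ind_nn[OF B] by (intro nn_integral_cong_AE) (auto simp: ennreal_mult')
  also have "\<dots> \<le> (\<integral>\<^sup>+x. ennreal (u x) \<partial>M)"
    using le by (intro nn_integral_mono_AE) (auto intro: ennreal_leI)
  also have "\<dots> \<le> (\<integral>\<^sup>+x. ennreal (norm (u x)) \<partial>M)"
    by (intro nn_integral_mono) (auto intro: ennreal_leI)
  also have "\<dots> < \<infinity>" using u by (simp add: integrable_iff_bounded)
  finally show ?thesis by (intro integrableI_bounded) auto
qed

lemma ce_ind_nz:
  assumes B[measurable]: "B \<in> sets M"
  shows "AE x in M. x \<in> B \<longrightarrow> real_cond_exp M F (indicator B) x \<noteq> 0"
proof -
  define N where "N = {x\<in>space M. real_cond_exp M F (indicator B) x = 0}"
  have NF[measurable]: "N \<in> sets F"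
  proof -
    have "{x\<in>space F. real_cond_exp M F (indicator B) x = 0} \<in> sets F" by measurable
    then show ?thesis by (metis N_def subalg subalgebra_def)
  qed
  have NM[measurable]: "N \<in> sets M" by (rule setsF_M[OF NF])
  have "(\<integral>x. indicator N x * indicator B x \<partial>M) = (\<integral>x. indicator N x * real_cond_exp M F (indicator B) x \<partial>M)"
    by (rule real_cond_exp_intg(2)[symmetric])
       (use integrable_mult_indicator[OF NM int_ind[OF B]] in auto)
  also have "\<dots> = (\<integral>x. 0 \<partial>M)" by (intro Bochner_Integration.integral_cong) (auto simp: N_def indicator_def)
  finally have "(\<integral>x. indicator (N \<inter> B) x \<partial>M) = (0::real)"
    by (simp add: indicator_inter_arith)
  then have "measure M (N \<inter> B) = 0" by (simp add: emeasure_finite)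
  then have "AE x in M. x \<notin> N \<inter> B"
    by (intro AE_not_in) (auto simp: emeasure_eq_measure)
  then show ?thesis by eventually_elim (use sets.sets_into_space[OF B] in \<open>auto simp: N_def\<close>)
qed

lemma abs_div_mult_le: "\<bar>a / c\<bar> * c \<le> \<bar>a::real\<bar>"
proof (cases "c \<le> 0")
  case True then show ?thesis by (simp add: mult_nonneg_nonpos order_trans[of _ 0])
next
  case False then show ?thesis by (simp add: abs_divide)
qed

lemma int_indU: fixes U :: "'a \<Rightarrow> real" shows "B \<in> sets M \<Longrightarrow> integrable M U \<Longrightarrow> integrable M (\<lambda>y. indicator B y * U y)"
  using integrable_mult_indicator[of B M U] by simp

lemma KL1:
  assumes B[measurable]: "B \<in> sets M" and U: "integrable M U"
  shows "integrable M (\<lambda>x. cond_exp_given M F B U x * indicator B x)"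
  unfolding cond_exp_given_def
proof (rule RB[OF B, where u="\<lambda>x. \<bar>real_cond_exp M F (\<lambda>y. indicator B y * U y) x\<bar>"])
  show "integrable M (\<lambda>x. \<bar>real_cond_exp M F (\<lambda>y. indicator B y * U y) x\<bar>)"
    by (intro integrable_abs real_cond_exp_int(1) int_indU[OF B U])
  show "AE x in M. \<bar>real_cond_exp M F (\<lambda>y. indicator B y * U y) x / real_cond_exp M F (indicator B) x\<bar> *
        real_cond_exp M F (indicator B) x \<le> \<bar>real_cond_exp M F (\<lambda>y. indicator B y * U y) x\<bar>"
    by (rule AE_I2, rule abs_div_mult_le)
qed measurable

lemma KL2:
  assumes B[measurable]: "B \<in> sets M" and U: "integrable M U"
  shows "integrable M (\<lambda>x. (U x - cond_exp_given M F B U x) * indicator B x)"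
proof -
  have "integrable M (\<lambda>x. indicator B x * U x - cond_exp_given M F B U x * indicator B x)"
    by (intro Bochner_Integration.integrable_diff int_indU[OF B U] KL1[OF B U])
  then show ?thesis by (simp add: algebra_simps)
qed

lemma KL0:
  assumes B[measurable]: "B \<in> sets M" and U: "integrable M U" and C: "C \<in> sets F"
  shows "(\<integral>x. indicator C x * ((U x - cond_exp_given M F B U x) * indicator B x) \<partial>M) = 0"
proof -
  define u where "u = real_cond_exp M F (\<lambda>y. indicator B y * U y)"
  define b where "b = real_cond_exp M F (indicator B)"
  define N where "N = {x\<in>space M. b x = 0}"
  have CM[measurable]: "C \<in> sets M" by (rule setsF_M[OF C])
  have [measurable]: "C \<in> sets F" by (rule C)
  have UM[measurable]: "U \<in> borel_measurable M" using U by auto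
  have uF[measurable]: "u \<in> borel_measurable F" "b \<in> borel_measurable F" by (simp_all add: u_def b_def)
  have NF[measurable]: "N \<in> sets F"
  proof -
    have "{x\<in>space F. b x = 0} \<in> sets F" by measurable
    then show ?thesis by (metis N_def subalg subalgebra_def)
  qed
  have NM[measurable]: "N \<in> sets M" by (rule setsF_M[OF NF])
  have CN[measurable]: "C \<inter> N \<in> sets F" by simp
  have iBU: "integrable M (\<lambda>y. indicator B y * U y)" by (rule int_indU[OF B U])
  have iu: "integrable M u" unfolding u_def by (rule real_cond_exp_int(1)[OF iBU])
  have gam: "\<And>x. cond_exp_given M F B U x = u x / b x" by (simp add: cond_exp_given_def u_def b_def)
  have iG: "integrable M (\<lambda>x. u x / b x * indicator B x)" using KL1[OF B U] by (simp add: gam)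
  have e1: "(\<integral>x. indicator C x * (indicator B x * U x) \<partial>M) = (\<integral>x. indicator C x * u x \<partial>M)"
    unfolding u_def
    by (rule real_cond_exp_intg(2)[symmetric]) (use int_indU[OF CM iBU] in auto)
  have e2: "(\<integral>x. (indicator C x * (u x / b x)) * indicator B x \<partial>M) = (\<integral>x. (indicator C x * (u x / b x)) * b x \<partial>M)"
  proof -
    have "(\<integral>x. (indicator C x * (u x / b x)) * real_cond_exp M F (indicator B) x \<partial>M) = (\<integral>x. (indicator C x * (u x / b x)) * indicator B x \<partial>M)"
      by (rule real_cond_exp_intg(2)) (use int_indU[OF CM iG] in \<open>auto simp: ac_simps\<close>)
    then show ?thesis by (simp add: b_def)
  qed
  have CsubS: "C \<subseteq> space M" using sets.sets_into_space[OF CM] .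
  have e3: "\<And>x. (indicator C x * (u x / b x)) * b x = indicator C x * u x - indicator (C \<inter> N) x * u x"
    using CsubS by (auto simp: indicator_def N_def)
  have e4: "(\<integral>x. indicator (C \<inter> N) x * u x \<partial>M) = (\<integral>x. indicator (C \<inter> N) x * (indicator B x * U x) \<partial>M)"
    unfolding u_def
    by (rule real_cond_exp_intg(2)) (use int_indU[OF _ iBU, of "C \<inter> N"] in auto)
  have e5: "(\<integral>x. indicator (C \<inter> N) x * (indicator B x * U x) \<partial>M) = 0"
  proof (rule integral_eq_zero_AE)
    show "AE x in M. indicator (C \<inter> N) x * (indicator B x * U x) = 0"
      using ce_ind_nz[OF B] by eventually_elim (auto simp: indicator_def N_def b_def)
  qed
  have iCu: "integrable M (\<lambda>x. indicator C x * u x)" using int_indU[OF CM iu] .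
  have iCNu: "integrable M (\<lambda>x. indicator (C \<inter> N) x * u x)" using int_indU[OF _ iu, of "C \<inter> N"] by simp
  have "(\<integral>x. indicator C x * ((U x - cond_exp_given M F B U x) * indicator B x) \<partial>M)
      = (\<integral>x. indicator C x * (indicator B x * U x) - (indicator C x * (u x / b x)) * indicator B x \<partial>M)"
    by (intro Bochner_Integration.integral_cong) (auto simp: gam algebra_simps)
  also have "\<dots> = (\<integral>x. indicator C x * (indicator B x * U x) \<partial>M) - (\<integral>x. (indicator C x * (u x / b x)) * indicator B x \<partial>M)"
    by (rule Bochner_Integration.integral_diff) (use int_indU[OF CM iBU] int_indU[OF CM iG] in \<open>auto simp: ac_simps\<close>)
  also have "\<dots> = (\<integral>x. indicator C x * u x \<partial>M) - (\<integral>x. indicator C x * u x - indicator (C \<inter> N) x * u x \<partial>M)"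
    by (simp only: e1 e2 e3)
  also have "\<dots> = 0"
    using e4 e5 by (simp add: Bochner_Integration.integral_diff[OF iCu iCNu])
  finally show ?thesis .
qed

lemma QE1:
  assumes B[measurable]: "B \<in> sets M" and B'[measurable]: "B' \<in> sets M" and S[measurable]: "S \<in> sets M"
    and sub: "B \<subseteq> S" and U: "integrable M U"
  shows "integrable M (\<lambda>x. qf M F S B x * cond_exp_given M F B' U x * indicator B' x)"
  unfolding cond_exp_given_def qf_def
proof (rule RB[OF B', where u="\<lambda>x. \<bar>real_cond_exp M F (\<lambda>y. indicator B' y * U y) x\<bar>"])
  show "integrable M (\<lambda>x. \<bar>real_cond_exp M F (\<lambda>y. indicator B' y * U y) x\<bar>)"
    by (intro integrable_abs real_cond_exp_int(1) int_indU[OF B' U])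
  show "AE x in M. \<bar>real_cond_exp M F (indicator B) x / real_cond_exp M F (indicator S) x *
         (real_cond_exp M F (\<lambda>y. indicator B' y * U y) x / real_cond_exp M F (indicator B') x)\<bar> *
        real_cond_exp M F (indicator B') x \<le> \<bar>real_cond_exp M F (\<lambda>y. indicator B' y * U y) x\<bar>"
    using ce_ind_01[OF B] ce_ind_01[OF B'] ce_ind_mono[OF B S sub]
    by eventually_elim (rule arith_qe1, auto)
qed measurable

lemma QE2:
  assumes B[measurable]: "B \<in> sets M" and Bc[measurable]: "Bc \<in> sets M" and S[measurable]: "S \<in> sets M"
    and sub: "Bc \<subseteq> S" and U: "integrable M U"
  shows "integrable M (\<lambda>x. qf M F S B x * cond_exp_given M F B U x * indicator Bc x)"
  unfolding cond_exp_given_def qf_def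
proof (rule RB[OF Bc, where u="\<lambda>x. \<bar>real_cond_exp M F (\<lambda>y. indicator B y * U y) x\<bar>"])
  show "integrable M (\<lambda>x. \<bar>real_cond_exp M F (\<lambda>y. indicator B y * U y) x\<bar>)"
    by (intro integrable_abs real_cond_exp_int(1) int_indU[OF B U])
  show "AE x in M. \<bar>real_cond_exp M F (indicator B) x / real_cond_exp M F (indicator S) x *
         (real_cond_exp M F (\<lambda>y. indicator B y * U y) x / real_cond_exp M F (indicator B) x)\<bar> *
        real_cond_exp M F (indicator Bc) x \<le> \<bar>real_cond_exp M F (\<lambda>y. indicator B y * U y) x\<bar>"
    using ce_ind_01[OF Bc] ce_ind_mono[OF Bc S sub]
    by eventually_elim (rule arith_qe2, auto)
qed measurable

lemma Wpart_int:
  assumes B1[measurable]: "B1 \<in> sets M" and B0[measurable]: "B0 \<in> sets M" and S[measurable]: "S \<in> sets M"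
    and sub1: "B1 \<subseteq> S" and sub0: "B0 \<subseteq> S" and U: "integrable M U"
  shows "integrable M (\<lambda>x. qf M F S B0 x * (cond_exp_given M F B1 U x - cond_exp_given M F B0 U x) * indicator B1 x)"
proof -
  have "integrable M (\<lambda>x. qf M F S B0 x * cond_exp_given M F B1 U x * indicator B1 x
       - qf M F S B0 x * cond_exp_given M F B0 U x * indicator B1 x)"
    by (intro Bochner_Integration.integrable_diff QE1 QE2) (use assms in auto)
  then show ?thesis by (simp add: algebra_simps)
qed

lemma W_int:
  assumes B1[measurable]: "B1 \<in> sets M" and B0[measurable]: "B0 \<in> sets M" and S[measurable]: "S \<in> sets M"
    and sub1: "B1 \<subseteq> S" and sub0: "B0 \<subseteq> S" and U: "integrable M U"
  shows "integrable M (\<lambda>x. qf M F S B0 x * (cond_exp_given M F B1 U x - cond_exp_given M F B0 U x) * indicator B1 x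
     - qf M F S B1 x * (cond_exp_given M F B1 U x - cond_exp_given M F B0 U x) * indicator B0 x)"
proof -
  have "integrable M (\<lambda>x. qf M F S B1 x * (cond_exp_given M F B0 U x - cond_exp_given M F B1 U x) * indicator B0 x)"
    by (rule Wpart_int) (use assms in auto)
  then have "integrable M (\<lambda>x. - (qf M F S B1 x * (cond_exp_given M F B1 U x - cond_exp_given M F B0 U x) * indicator B0 x))"
    by (simp add: algebra_simps)
  then have "integrable M (\<lambda>x. qf M F S B1 x * (cond_exp_given M F B1 U x - cond_exp_given M F B0 U x) * indicator B0 x)"
    by simp
  then show ?thesis
    by (intro Bochner_Integration.integrable_diff Wpart_int[OF B1 B0 S sub1 sub0 U])
qed

lemma W_zero:
  assumes B1[measurable]: "B1 \<in> sets M" and B0[measurable]: "B0 \<in> sets M" and S[measurable]: "S \<in> sets M"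
    and sub1: "B1 \<subseteq> S" and sub0: "B0 \<subseteq> S" and U: "integrable M U" and C[measurable]: "C \<in> sets F"
  shows "(\<integral>x. indicator C x * (qf M F S B0 x * (cond_exp_given M F B1 U x - cond_exp_given M F B0 U x) * indicator B1 x
     - qf M F S B1 x * (cond_exp_given M F B1 U x - cond_exp_given M F B0 U x) * indicator B0 x) \<partial>M) = 0"
proof -
  define c where "c x = cond_exp_given M F B1 U x - cond_exp_given M F B0 U x" for x
  have CM[measurable]: "C \<in> sets M" by (rule setsF_M[OF C])
  have cF[measurable]: "c \<in> borel_measurable F" unfolding c_def cond_exp_given_def by measurable
  have qF[measurable]: "qf M F S B \<in> borel_measurable F" for B unfolding qf_def by measurable
  have i1: "integrable M (\<lambda>x. qf M F S B0 x * c x * indicator B1 x)"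
    unfolding c_def by (rule Wpart_int) (use assms in auto)
  have i0: "integrable M (\<lambda>x. qf M F S B1 x * c x * indicator B0 x)"
  proof -
    have "integrable M (\<lambda>x. qf M F S B1 x * (cond_exp_given M F B0 U x - cond_exp_given M F B1 U x) * indicator B0 x)"
      by (rule Wpart_int) (use assms in auto)
    then have "integrable M (\<lambda>x. - (qf M F S B1 x * c x * indicator B0 x))"
      by (simp add: c_def algebra_simps)
    then show ?thesis by simp
  qed
  have i1': "integrable M (\<lambda>x. (indicator C x * qf M F S B0 x * c x) * indicator B1 x)"
    using int_indU[OF CM i1] by (simp add: ac_simps)
  have i0': "integrable M (\<lambda>x. (indicator C x * qf M F S B1 x * c x) * indicator B0 x)"
    using int_indU[OF CM i0] by (simp add: ac_simps)
  have r1: "(\<integral>x. (indicator C x * qf M F S B0 x * c x) * real_cond_exp M F (indicator B1) x \<partial>M)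
      = (\<integral>x. (indicator C x * qf M F S B0 x * c x) * indicator B1 x \<partial>M)"
    and r1i: "integrable M (\<lambda>x. (indicator C x * qf M F S B0 x * c x) * real_cond_exp M F (indicator B1) x)"
    using real_cond_exp_intg[OF i1'] by auto
  have r0: "(\<integral>x. (indicator C x * qf M F S B1 x * c x) * real_cond_exp M F (indicator B0) x \<partial>M)
      = (\<integral>x. (indicator C x * qf M F S B1 x * c x) * indicator B0 x \<partial>M)"
    and r0i: "integrable M (\<lambda>x. (indicator C x * qf M F S B1 x * c x) * real_cond_exp M F (indicator B0) x)"
    using real_cond_exp_intg[OF i0'] by auto
  have "(\<integral>x. indicator C x * (qf M F S B0 x * c x * indicator B1 x - qf M F S B1 x * c x * indicator B0 x) \<partial>M)
     = (\<integral>x. (indicator C x * qf M F S B0 x * c x) * indicator B1 x - (indicator C x * qf M F S B1 x * c x) * indicator B0 x \<partial>M)"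
    by (intro Bochner_Integration.integral_cong) (auto simp: algebra_simps)
  also have "\<dots> = (\<integral>x. (indicator C x * qf M F S B0 x * c x) * indicator B1 x \<partial>M) - (\<integral>x. (indicator C x * qf M F S B1 x * c x) * indicator B0 x \<partial>M)"
    by (rule Bochner_Integration.integral_diff[OF i1' i0'])
  also have "\<dots> = (\<integral>x. (indicator C x * qf M F S B0 x * c x) * real_cond_exp M F (indicator B1) x
      - (indicator C x * qf M F S B1 x * c x) * real_cond_exp M F (indicator B0) x \<partial>M)"
    by (simp add: r1 r0 Bochner_Integration.integral_diff[OF r1i r0i])
  also have "\<dots> = (\<integral>x. 0 \<partial>M)"
    by (intro Bochner_Integration.integral_cong) (auto simp: qf_def)
  finally show ?thesis by (simp add: c_def)
qed

end



lemma intG_add: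
  fixes f g :: "'x \<Rightarrow> real"
  assumes "G \<in> sets N" "integrable N f" "integrable N g"
  shows "(\<integral>x. indicator G x * (f x + g x) \<partial>N) = (\<integral>x. indicator G x * f x \<partial>N) + (\<integral>x. indicator G x * g x \<partial>N)"
proof -
  have "integrable N (\<lambda>x. indicator G x * f x)" "integrable N (\<lambda>x. indicator G x * g x)"
    using integrable_mult_indicator[OF assms(1) assms(2)] integrable_mult_indicator[OF assms(1) assms(3)] by simp_all
  then show ?thesis by (simp add: distrib_left)
qed

lemma intG_diff:
  fixes f g :: "'x \<Rightarrow> real"
  assumes "G \<in> sets N" "integrable N f" "integrable N g"
  shows "(\<integral>x. indicator G x * (f x - g x) \<partial>N) = (\<integral>x. indicator G x * f x \<partial>N) - (\<integral>x. indicator G x * g x \<partial>N)"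
proof -
  have "integrable N (\<lambda>x. indicator G x * f x)" "integrable N (\<lambda>x. indicator G x * g x)"
    using integrable_mult_indicator[OF assms(1) assms(2)] integrable_mult_indicator[OF assms(1) assms(3)] by simp_all
  then show ?thesis by (simp add: right_diff_distrib)
qed

lemma intG_sum:
  fixes f :: "nat \<Rightarrow> 'x \<Rightarrow> real"
  assumes "G \<in> sets N" "\<And>i. i \<in> I \<Longrightarrow> integrable N (f i)"
  shows "(\<integral>x. indicator G x * (\<Sum>i\<in>I. f i x) \<partial>N) = (\<Sum>i\<in>I. \<integral>x. indicator G x * f i x \<partial>N)"
proof -
  have "integrable N (\<lambda>x. indicator G x * f i x)" if "i \<in> I" for i
    using integrable_mult_indicator[OF assms(1) assms(2)[OF that]] by simp
  then show ?thesis by (simp add: sum_distrib_left)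
qed

locale setting =
  fixes M :: "'a measure" and MZ :: "'b measure" and K :: nat
    and Z :: "nat \<Rightarrow> 'a \<Rightarrow> 'b"
    and Y A Yinf :: "nat \<Rightarrow> 'a \<Rightarrow> real"
    and Ycf :: "nat \<Rightarrow> nat \<Rightarrow> 'a \<Rightarrow> real"
  assumes prob: "prob_space M"
    and Z_meas: "\<And>j. j \<le> K \<Longrightarrow> Z j \<in> M \<rightarrow>\<^sub>M MZ"
    and Y_int: "\<And>j. j \<le> K \<Longrightarrow> integrable M (Y j)"
    and A_meas: "\<And>j. j \<le> K \<Longrightarrow> A j \<in> borel_measurable M"
    and Yinf_int: "\<And>j. j \<le> K \<Longrightarrow> integrable M (Yinf j)"
    and Ycf_int: "\<And>j l. j \<le> K \<Longrightarrow> l \<le> K \<Longrightarrow> integrable M (Ycf j l)"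
    and binary: "\<And>j x. j \<le> K \<Longrightarrow> x \<in> space M \<Longrightarrow> A j x = 0 \<or> A j x = 1"
    and consistency: "AE x in M. \<forall>l\<le>K.
        (T_init K A x < enat l \<longrightarrow> Y l x = Ycf (the_enat (T_init K A x)) l x)
      \<and> (enat l \<le> T_init K A x \<longrightarrow> Y l x = Yinf l x)"
begin

abbreviation "TT \<equiv> T_init K A"
abbreviation "Lf \<equiv> L_sigma M MZ Z Y A"
abbreviation "LA \<equiv> LA_sigma M MZ Z Y A"
abbreviation "Ss j \<equiv> {y \<in> space M. enat j \<le> TT y}"
abbreviation "Bs j a \<equiv> {y \<in> space M. enat j \<le> TT y \<and> A j y = a}"

lemma T_ge: "j \<le> K \<Longrightarrow> (enat j \<le> TT x) = (\<forall>i<j. A i x = 0)"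
proof (cases "\<exists>m\<le>K. A m x \<noteq> 0")
  case True
  assume jK: "j \<le> K"
  define t where "t = (LEAST m. A m x \<noteq> 0)"
  have T: "TT x = enat t" using True by (simp add: T_init_def t_def)
  have At: "A t x \<noteq> 0" using True LeastI_ex[of "\<lambda>m. A m x \<noteq> 0"] unfolding t_def by blast
  have lt: "\<And>i. i < t \<Longrightarrow> A i x = 0" unfolding t_def using not_less_Least by blast
  show ?thesis
  proof
    assume "enat j \<le> TT x" then have "j \<le> t" using T by simp
    then show "\<forall>i<j. A i x = 0" using lt by auto
  next
    assume "\<forall>i<j. A i x = 0"
    then have "\<not> t < j" using At by auto
    then show "enat j \<le> TT x" using T by simp
  qed
next
  case False
  assume "j \<le> K"
  then show ?thesis using False by (auto simp: T_init_def)
qed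

lemma T_eq: "j \<le> K \<Longrightarrow> (TT x = enat j) = ((\<forall>i<j. A i x = 0) \<and> A j x \<noteq> 0)"
proof
  assume jK: "j \<le> K" and T: "TT x = enat j"
  then have ex: "\<exists>m\<le>K. A m x \<noteq> 0" by (auto simp: T_init_def split: if_splits)
  then have j: "j = (LEAST m. A m x \<noteq> 0)" using T by (simp add: T_init_def)
  have "A j x \<noteq> 0" unfolding j using ex LeastI_ex[of "\<lambda>m. A m x \<noteq> 0"] by blast
  moreover have "\<forall>i<j. A i x = 0" unfolding j using not_less_Least[of _ "\<lambda>m. A m x \<noteq> 0"] by blast
  ultimately show "(\<forall>i<j. A i x = 0) \<and> A j x \<noteq> 0" by blast
next
  assume jK: "j \<le> K" and H: "(\<forall>i<j. A i x = 0) \<and> A j x \<noteq> 0"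
  then have ex: "\<exists>m\<le>K. A m x \<noteq> 0" by auto
  have "(LEAST m. A m x \<noteq> 0) = j"
    using H by (intro Least_equality) (auto simp: not_less[symmetric])
  then show "TT x = enat j" using ex by (simp add: T_init_def)
qed

lemma T_fin: "TT x < enat l \<Longrightarrow> \<exists>t. TT x = enat t \<and> t < l \<and> t \<le> K"
proof -
  assume H: "TT x < enat l"
  then have ex: "\<exists>m\<le>K. A m x \<noteq> 0" by (auto simp: T_init_def split: if_splits)
  then obtain m0 where "m0 \<le> K" "A m0 x \<noteq> 0" by auto
  then have "(LEAST m. A m x \<noteq> 0) \<le> K" by (meson Least_le order_trans)
  then show ?thesis using H ex by (auto simp: T_init_def)
qed

lemma psubM: "prob_space M" by (rule prob)

lemma gen_by_sub: "gen_by M X N \<subseteq> Pow (space M)"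
  by (auto simp: gen_by_def)

lemma gen_by_sets: "X \<in> M \<rightarrow>\<^sub>M N \<Longrightarrow> gen_by M X N \<subseteq> sets M"
  by (auto simp: gen_by_def measurable_sets)

definition "gL j = (\<Union>i\<in>{..j}. gen_by M (Z i) MZ) \<union> (\<Union>i\<in>{..<j}. gen_by M (Y i) borel) \<union> (\<Union>i\<in>{..<j}. gen_by M (A i) borel)"
definition "gLA j = (\<Union>i\<in>{..j}. gen_by M (Z i) MZ) \<union> (\<Union>i\<in>{..<j}. gen_by M (Y i) borel) \<union> (\<Union>i\<in>{..j}. gen_by M (A i) borel)"

lemma gL_Pow: "gL j \<subseteq> Pow (space M)" unfolding gL_def by (auto simp: gen_by_def)
lemma gLA_Pow: "gLA j \<subseteq> Pow (space M)" unfolding gLA_def by (auto simp: gen_by_def)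

lemma sets_L: "sets (Lf j) = sigma_sets (space M) (gL j)"
  unfolding L_sigma_def gL_def[symmetric] by (rule sets_measure_of[OF gL_Pow])
lemma sets_LA: "sets (LA j) = sigma_sets (space M) (gLA j)"
  unfolding LA_sigma_def gLA_def[symmetric] by (rule sets_measure_of[OF gLA_Pow])
lemma space_L: "space (Lf j) = space M"
  unfolding L_sigma_def by (rule space_measure_of_conv)
lemma space_LA: "space (LA j) = space M"
  unfolding LA_sigma_def by (rule space_measure_of_conv)

lemma gL_sets: "j \<le> K \<Longrightarrow> gL j \<subseteq> sets M"
  unfolding gL_def gen_by_def by (auto intro!: measurable_sets Z_meas A_meas borel_measurable_integrable Y_int)
lemma gLA_sets: "j \<le> K \<Longrightarrow> gLA j \<subseteq> sets M"
  unfolding gLA_def gen_by_def by (auto intro!: measurable_sets Z_meas A_meas borel_measurable_integrable Y_int)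

lemma subalg_L: "j \<le> K \<Longrightarrow> subalgebra M (Lf j)"
  unfolding subalgebra_def sets_L space_L using gL_sets by (simp add: sets.sigma_sets_subset)
lemma subalg_LA: "j \<le> K \<Longrightarrow> subalgebra M (LA j)"
  unfolding subalgebra_def sets_LA space_LA using gLA_sets by (simp add: sets.sigma_sets_subset)

lemma psub_L: "j \<le> K \<Longrightarrow> psub M (Lf j)"
  using subalg_L prob by (simp add: psub_def psub_axioms_def)
lemma psub_LA: "j \<le> K \<Longrightarrow> psub M (LA j)"
  using subalg_LA prob by (simp add: psub_def psub_axioms_def)

lemma L_mono: "j \<le> i \<Longrightarrow> sets (Lf j) \<subseteq> sets (Lf i)"
  unfolding sets_L by (rule sigma_sets_mono') (auto simp: gL_def)
lemma L_LA: "sets (Lf j) \<subseteq> sets (LA j)"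
  unfolding sets_L sets_LA by (rule sigma_sets_mono') (auto simp: gL_def gLA_def)
lemma LA_L: "j < i \<Longrightarrow> sets (LA j) \<subseteq> sets (Lf i)"
  unfolding sets_L sets_LA by (rule sigma_sets_mono') (auto simp: gL_def gLA_def)

lemma A_meas_L: "i < j \<Longrightarrow> A i \<in> borel_measurable (Lf j)"
proof (rule measurableI)
  fix B :: "real set" assume "i < j" "B \<in> sets borel"
  then have "A i -` B \<inter> space M \<in> gL j" unfolding gL_def gen_by_def by blast
  then show "A i -` B \<inter> space (Lf j) \<in> sets (Lf j)" unfolding sets_L space_L by auto
qed auto

lemma A_meas_LA: "i \<le> j \<Longrightarrow> A i \<in> borel_measurable (LA j)"
proof (rule measurableI)
  fix B :: "real set" assume "i \<le> j" "B \<in> sets borel"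
  then have "A i -` B \<inter> space M \<in> gLA j" unfolding gLA_def gen_by_def by blast
  then show "A i -` B \<inter> space (LA j) \<in> sets (LA j)" unfolding sets_LA space_LA by auto
qed auto

lemma set_all0:
  assumes "\<And>i. i < j \<Longrightarrow> A i \<in> borel_measurable N"
  shows "{y \<in> space N. \<forall>i\<in>{..<j}. A i y = 0} \<in> sets N"
proof (rule sets.sets_Collect_countable_All')
  fix i assume "i \<in> {..<j}"
  then have [measurable]: "A i \<in> borel_measurable N" using assms by auto
  show "{y \<in> space N. A i y = 0} \<in> sets N" by measurable
qed auto

lemma Ss_L: "j \<le> K \<Longrightarrow> Ss j \<in> sets (Lf j)"
proof -
  assume jK: "j \<le> K"
  have "{y \<in> space (Lf j). \<forall>i\<in>{..<j}. A i y = 0} \<in> sets (Lf j)" by (rule set_all0) (rule A_meas_L)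
  moreover have "{y \<in> space (Lf j). \<forall>i\<in>{..<j}. A i y = 0} = Ss j"
    using T_ge[OF jK] by (auto simp: space_L)
  ultimately show ?thesis by simp
qed

lemma Ss_LA: "j \<le> K \<Longrightarrow> Ss j \<in> sets (LA j)"
  using Ss_L L_LA by blast

lemma Ss_M: "j \<le> K \<Longrightarrow> Ss j \<in> sets M"
  using Ss_L subalg_L by (auto simp: subalgebra_def)

lemma Bs_M: "j \<le> K \<Longrightarrow> Bs j a \<in> sets M"
proof -
  assume jK: "j \<le> K"
  have [measurable]: "A j \<in> borel_measurable M" using A_meas jK by auto
  have "Bs j a = Ss j \<inter> {y\<in>space M. A j y = a}" by auto
  also have "\<dots> \<in> sets M" using Ss_M[OF jK] by measurable
  finally show ?thesis .
qed

lemma BT_eq: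
  assumes jK: "j \<le> K" shows "{y \<in> space M. TT y = enat j \<and> A j y = 1} = Bs j 1"
proof -
  have "TT y = enat j" if "enat j \<le> TT y" "A j y = 1" for y
    using that T_ge[OF jK, of y] T_eq[OF jK, of y] by simp
  then show ?thesis by auto
qed

lemma ind_B1:
  assumes jK: "j \<le> K" and x: "x \<in> space M"
  shows "indicator (Bs j 1) x = (if TT x = enat j then 1 else (0::real))"
proof -
  have "x \<in> {y \<in> space M. TT y = enat j \<and> A j y = 1} \<longleftrightarrow> x \<in> Bs j 1" by (simp only: BT_eq[OF jK])
  moreover have "TT x = enat j \<Longrightarrow> A j x = 1" using T_eq[OF jK, of x] binary[OF jK x] by auto
  ultimately show ?thesis using x by (auto simp: indicator_def)
qed

lemma DEC:
  assumes mK: "m \<le> K" and G: "G \<in> sets (LA m)"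
  shows "\<exists>C\<in>sets (Lf m). G \<inter> {y\<in>space M. A m y = a} = C \<inter> {y\<in>space M. A m y = a}"
proof -
  have "G \<in> sigma_sets (space M) (gLA m)" using G sets_LA by auto
  then show ?thesis
  proof induct
    case (Basic G)
    have eq: "{..m} = insert m {..<m}" by auto
    have "G \<in> gL m \<or> G \<in> gen_by M (A m) borel" using Basic unfolding gLA_def gL_def eq by blast
    then consider (L) "G \<in> gL m" | (Am) B where "B \<in> sets borel" "G = A m -` B \<inter> space M"
      unfolding gen_by_def by blast
    then show ?case
    proof cases
      case L then show ?thesis unfolding sets_L by (intro bexI[of _ G]) auto
    next
      case Am
      show ?thesis
      proof (cases "a \<in> B")
        case True
        then show ?thesis using Am by (intro bexI[of _ "space M"]) (auto simp: sets_L sigma_sets_top)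
      next
        case False
        then show ?thesis using Am by (intro bexI[of _ "{}"]) (auto simp: sets_L intro: sigma_sets.Empty)
      qed
    qed
  next
    case Empty then show ?case by (intro bexI[of _ "{}"]) (auto simp: sets_L intro: sigma_sets.Empty)
  next
    case (Compl G)
    then obtain C where C: "C \<in> sets (Lf m)" "G \<inter> {y\<in>space M. A m y = a} = C \<inter> {y\<in>space M. A m y = a}" by auto
    then have "space M - C \<in> sets (Lf m)" using sets.compl_sets[of C "Lf m"] by (simp add: space_L)
    moreover have "(space M - G) \<inter> {y\<in>space M. A m y = a} = (space M - C) \<inter> {y\<in>space M. A m y = a}"
      by (simp add: Diff_Int_distrib2 C(2))
    ultimately show ?case by blast
  next
    case (Union G)
    then have "\<forall>i. \<exists>C. C \<in> sets (Lf m) \<and> G i \<inter> {y\<in>space M. A m y = a} = C \<inter> {y\<in>space M. A m y = a}" by blast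
    from choice[OF this] obtain C where C: "\<forall>i. C i \<in> sets (Lf m) \<and> G i \<inter> {y\<in>space M. A m y = a} = C i \<inter> {y\<in>space M. A m y = a}"
      by blast
    then have "(\<Union>i. C i) \<in> sets (Lf m)" by auto
    moreover have "(\<Union>i. G i) \<inter> {y\<in>space M. A m y = a} = (\<Union>i. C i) \<inter> {y\<in>space M. A m y = a}"
    proof -
      have e: "G i \<inter> {y\<in>space M. A m y = a} = C i \<inter> {y\<in>space M. A m y = a}" for i using C by blast
      have "(\<Union>i. G i) \<inter> {y\<in>space M. A m y = a} = (\<Union>i. G i \<inter> {y\<in>space M. A m y = a})" by blast
      also have "\<dots> = (\<Union>i. C i \<inter> {y\<in>space M. A m y = a})" using e by simp
      also have "\<dots> = (\<Union>i. C i) \<inter> {y\<in>space M. A m y = a}" by blast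
      finally show ?thesis .
    qed
    ultimately show ?case by blast
  qed
qed


abbreviation "gamma \<equiv> blip_star M Lf TT A Ycf Yinf"
abbreviation "bias \<equiv> bias_star M Lf TT A Yinf"

definition "Dd i k' x = (Ycf i k' x - Yinf k' x - cond_exp_given M (Lf i) (Bs i 1) (\<lambda>y. Ycf i k' y - Yinf k' y) x) * indicator (Bs i 1) x"

definition "Wf j k x = qf M (Lf j) (Ss j) (Bs j 0) x * bias j k x * indicator (Bs j 1) x
   - qf M (Lf j) (Ss j) (Bs j 1) x * bias j k x * indicator (Bs j 0) x"

lemma gamma_eq: "i \<le> K \<Longrightarrow> gamma i k' x = cond_exp_given M (Lf i) (Bs i 1) (\<lambda>y. Ycf i k' y - Yinf k' y) x"
  unfolding blip_star_def by (simp only: BT_eq)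

lemma Hc_space:
  assumes x: "x \<in> space M" and kK: "k' \<le> K"
  shows "Hc Y TT gamma n k' x = (if n < k' then Y k' x - (\<Sum>i\<in>{n..<k'}. gamma i k' x * indicator (Bs i 1) x) else Y n x)"
proof -
  have "(\<Sum>i\<in>{n..<k'}. gamma i k' x * indicator {y. TT y = enat i} x) = (\<Sum>i\<in>{n..<k'}. gamma i k' x * indicator (Bs i 1) x)"
  proof (intro sum.cong refl)
    fix i assume "i \<in> {n..<k'}"
    then have iK: "i \<le> K" using kK by simp
    have "indicator {y. TT y = enat i} x = (if TT x = enat i then 1 else (0::real))" by (simp add: indicator_def)
    then show "gamma i k' x * indicator {y. TT y = enat i} x = gamma i k' x * indicator (Bs i 1) x"
      by (simp add: ind_B1[OF iK x])
  qed
  then show ?thesis by (simp add: Hc_def)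
qed

lemma Hc_dec:
  assumes nk: "n \<le> k'" and kK: "k' \<le> K"
  shows "AE x in M. x \<in> Ss n \<longrightarrow> Hc Y TT gamma n k' x = Yinf k' x + (\<Sum>i\<in>{n..<k'}. Dd i k' x)"
  using consistency
proof eventually_elim
  case (elim x)
  show ?case
  proof
    assume xS: "x \<in> Ss n"
    then have x: "x \<in> space M" and nT: "enat n \<le> TT x" by auto
    show "Hc Y TT gamma n k' x = Yinf k' x + (\<Sum>i\<in>{n..<k'}. Dd i k' x)"
    proof (cases "n < k'")
      case False
      then have "n = k'" using nk by simp
      then show ?thesis using elim nT kK x by (simp add: Hc_space)
    next
      case True
      have D: "(\<Sum>i\<in>{n..<k'}. Dd i k' x) = (\<Sum>i\<in>{n..<k'}. (Ycf i k' x - Yinf k' x) * indicator (Bs i 1) x)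
           - (\<Sum>i\<in>{n..<k'}. gamma i k' x * indicator (Bs i 1) x)"
        unfolding sum_subtractf[symmetric]
        by (intro sum.cong refl) (use kK in \<open>simp add: Dd_def gamma_eq algebra_simps\<close>)
      have key: "Y k' x = Yinf k' x + (\<Sum>i\<in>{n..<k'}. (Ycf i k' x - Yinf k' x) * indicator (Bs i 1) x)"
      proof (cases "TT x < enat k'")
        case True
        then obtain t where t: "TT x = enat t" "t < k'" "t \<le> K" using T_fin by blast
        have nt: "n \<le> t" using nT t by simp
        have "(\<Sum>i\<in>{n..<k'}. (Ycf i k' x - Yinf k' x) * indicator (Bs i 1) x)
            = (\<Sum>i\<in>{n..<k'}. if i = t then Ycf i k' x - Yinf k' x else 0)"
          by (intro sum.cong refl) (use kK x t in \<open>simp add: ind_B1\<close>)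
        also have "\<dots> = Ycf t k' x - Yinf k' x" using nt t by simp
        finally show ?thesis using elim True t kK by simp
      next
        case False
        have "(\<Sum>i\<in>{n..<k'}. (Ycf i k' x - Yinf k' x) * indicator (Bs i 1) x) = 0"
          by (intro sum.neutral ballI) (use kK x False in \<open>auto simp: ind_B1\<close>)
        then show ?thesis using elim False kK by (simp add: not_less)
      qed
      show ?thesis using True x kK by (simp add: Hc_space D key)
    qed
  qed
qed

lemma ind_SA: "(\<lambda>y. indicator (Ss j) y * indicator {y \<in> space M. A j y = a} y) = (indicator (Bs j a) :: 'a \<Rightarrow> real)"
  by (auto simp: indicator_def fun_eq_iff)

lemma W_eq:
  assumes jK: "j \<le> K" and x: "x \<in> space M"
  shows "pr_flip M Lf TT A j x * (2 * A j x - 1) * bias j k x * indicator {y. enat j \<le> TT y} x = Wf j k x"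
proof -
  have q: "pr_flip M Lf TT A j x = qf M (Lf j) (Ss j) {y \<in> space M. enat j \<le> TT y \<and> A j y = 1 - A j x} x"
    unfolding pr_flip_def cond_exp_given_def qf_def ind_SA ..
  consider "A j x = 0" | "A j x = 1" using binary[OF jK x] by blast
  then show ?thesis
  proof cases
    case 1 then show ?thesis using x by (simp add: q Wf_def indicator_def)
  next
    case 2 then show ?thesis using x by (simp add: q Wf_def indicator_def)
  qed
qed


lemma Dd_int: assumes iK: "i \<le> K" and kK: "k' \<le> K" shows "integrable M (Dd i k')"
proof -
  interpret psub M "Lf i" by (rule psub_L[OF iK])
  have U: "integrable M (\<lambda>y. Ycf i k' y - Yinf k' y)"
    by (intro Bochner_Integration.integrable_diff Ycf_int Yinf_int iK kK)
  show ?thesis using KL2[OF Bs_M[OF iK] U] unfolding Dd_def[abs_def] by simp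
qed

lemma Dd_zero: assumes iK: "i \<le> K" and kK: "k' \<le> K" and C: "C \<in> sets (Lf i)"
  shows "(\<integral>x. indicator C x * Dd i k' x \<partial>M) = 0"
proof -
  interpret psub M "Lf i" by (rule psub_L[OF iK])
  have U: "integrable M (\<lambda>y. Ycf i k' y - Yinf k' y)"
    by (intro Bochner_Integration.integrable_diff Ycf_int Yinf_int iK kK)
  show ?thesis using KL0[OF Bs_M[OF iK] U C] unfolding Dd_def by simp
qed

lemma Wf_int: assumes jK: "j \<le> K" and kK: "k \<le> K" shows "integrable M (Wf j k)"
proof -
  interpret psub M "Lf j" by (rule psub_L[OF jK])
  have U: "integrable M (\<lambda>y. Yinf k y - Yinf (k - 1) y)"
    by (intro Bochner_Integration.integrable_diff Yinf_int) (use kK in auto)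
  show ?thesis using W_int[OF Bs_M[OF jK] Bs_M[OF jK] Ss_M[OF jK] _ _ U]
    unfolding Wf_def[abs_def] bias_star_def by auto
qed

lemma Wf_zero: assumes jK: "j \<le> K" and kK: "k \<le> K" and C: "C \<in> sets (Lf j)"
  shows "(\<integral>x. indicator C x * Wf j k x \<partial>M) = 0"
proof -
  interpret psub M "Lf j" by (rule psub_L[OF jK])
  have U: "integrable M (\<lambda>y. Yinf k y - Yinf (k - 1) y)"
    by (intro Bochner_Integration.integrable_diff Yinf_int) (use kK in auto)
  show ?thesis using W_zero[OF Bs_M[OF jK] Bs_M[OF jK] Ss_M[OF jK] _ _ U C]
    unfolding Wf_def bias_star_def by auto
qed

lemma Wf_meas: assumes jK: "j \<le> K" shows "Wf j k \<in> borel_measurable M"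
proof -
  have [measurable]: "Bs j a \<in> sets M" for a by (rule Bs_M[OF jK])
  show ?thesis unfolding Wf_def[abs_def] bias_star_def cond_exp_given_def qf_def by measurable
qed

lemma gamma_meas: "(\<lambda>x. gamma i k' x) \<in> borel_measurable M"
  unfolding blip_star_def cond_exp_given_def by measurable


lemma main:
  assumes mk: "m < k" "k \<le> K"
  shows "AE x in M. enat m \<le> TT x \<longrightarrow>
      cond_exp_given M (LA m) (Ss m) (\<lambda>y. Hca_star M MZ K Z Y A Ycf Yinf m k y - Hc_star M MZ K Z Y A Ycf Yinf m (k - 1) y) x
    = cond_exp_given M (Lf m) (Ss m) (\<lambda>y. Hca_star M MZ K Z Y A Ycf Yinf m k y - Hc_star M MZ K Z Y A Ycf Yinf m (k - 1) y) x"
proof -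
  have mK: "m \<le> K" using mk by simp
  have k1K: "k - 1 \<le> K" using mk by simp
  interpret Lm: psub M "Lf m" by (rule psub_L[OF mK])
  interpret LAm: psub M "LA m" by (rule psub_LA[OF mK])
  have SL[measurable]: "Ss m \<in> sets (Lf m)" by (rule Ss_L[OF mK])
  have SM[measurable]: "Ss m \<in> sets M" by (rule Ss_M[OF mK])
  have BM[measurable]: "Bs m a \<in> sets M" for a by (rule Bs_M[OF mK])
  have BS: "Bs m a \<subseteq> Ss m" for a by auto
  define D where "D = (\<lambda>y. Yinf k y - Yinf (k - 1) y)"
  have iD: "integrable M D" unfolding D_def by (intro Bochner_Integration.integrable_diff Yinf_int) (use mk in auto)
  define e where "e a = cond_exp_given M (Lf m) (Bs m a) D" for a
  define q where "q a = qf M (Lf m) (Ss m) (Bs m a)" for a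
  define v where "v x = q 1 x * e 1 x + q 0 x * e 0 x" for x
  define V where "V x = indicator (Ss m) x * v x" for x
  define X1 where "X1 = (\<lambda>y. indicator (Ss m) y * (Hca_star M MZ K Z Y A Ycf Yinf m k y - Hc_star M MZ K Z Y A Ycf Yinf m (k - 1) y))"
  define R where "R x = (\<Sum>i\<in>{m..<k}. Dd i k x) - (\<Sum>i\<in>{m..<k-1}. Dd i (k-1) x) - (\<Sum>j\<in>{m<..k}. Wf j k x)
      + (D x - e 1 x) * indicator (Bs m 1) x + (D x - e 0 x) * indicator (Bs m 0) x" for x

  have XA: "Hca_star M MZ K Z Y A Ycf Yinf m k x - Hc_star M MZ K Z Y A Ycf Yinf m (k - 1) x
      = Hc Y TT gamma m k x - (\<Sum>j\<in>{m..k}. Wf j k x) - Hc Y TT gamma m (k-1) x" if x: "x \<in> space M" for x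
  proof -
    have "(\<Sum>j\<in>{m..k}. pr_flip M Lf TT A j x * (2 * A j x - 1) * bias j k x * indicator {y. enat j \<le> TT y} x) = (\<Sum>j\<in>{m..k}. Wf j k x)"
      by (intro sum.cong refl W_eq) (use mk x in auto)
    then show ?thesis by (simp add: Hca_star_def Hc_star_def Hca_def)
  qed

  have qsum: "AE x in M. x \<in> Ss m \<longrightarrow> q 0 x + q 1 x = 1"
  proof -
    have 1: "AE x in M. real_cond_exp M (Lf m) (\<lambda>x. indicator (Bs m 0) x + indicator (Bs m 1) x) x
        = real_cond_exp M (Lf m) (indicator (Bs m 0)) x + real_cond_exp M (Lf m) (indicator (Bs m 1)) x"
      by (rule Lm.real_cond_exp_add) (auto intro: Lm.int_ind)
    have e: "(\<lambda>x. indicator (Bs m 0) x + indicator (Bs m 1) x) = (indicator (Ss m) :: 'a \<Rightarrow> real)"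
      using binary[OF mK] by (auto simp: fun_eq_iff indicator_def)
    have 2: "AE x in M. real_cond_exp M (Lf m) (indicator (Ss m)) x = indicator (Ss m) x"
      by (rule Lm.real_cond_exp_F_meas) (auto intro: Lm.int_ind)
    show ?thesis using 1 2 unfolding e by eventually_elim (auto simp: q_def qf_def add_divide_distrib[symmetric])
  qed

  have out0: "indicator (Bs i a) x = (0::real)" if "x \<notin> Ss m" "m \<le> i" for i a x
  proof -
    have "x \<notin> Bs i a"
    proof
      assume "x \<in> Bs i a"
      then have "x \<in> space M" "enat i \<le> TT x" by auto
      moreover have "enat m \<le> enat i" using that by simp
      ultimately have "enat m \<le> TT x" "x \<in> space M" by (meson order_trans)+
      then show False using that(1) by simp
    qed
    then show ?thesis by simp
  qed

  have hd1: "AE x in M. x \<in> Ss m \<longrightarrow> Hc Y TT gamma m k x = Yinf k x + (\<Sum>i\<in>{m..<k}. Dd i k x)"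
    by (rule Hc_dec) (use mk in auto)
  have hd2: "AE x in M. x \<in> Ss m \<longrightarrow> Hc Y TT gamma m (k-1) x = Yinf (k-1) x + (\<Sum>i\<in>{m..<k-1}. Dd i (k-1) x)"
    by (rule Hc_dec) (use mk in auto)
  have XR: "AE x in M. X1 x - V x = R x"
    using hd1 hd2 qsum AE_space
  proof eventually_elim
    case (elim x)
    then have x: "x \<in> space M" by simp
    show ?case
    proof (cases "x \<in> Ss m")
      case True
      have H1: "Hc Y TT gamma m k x = Yinf k x + (\<Sum>i\<in>{m..<k}. Dd i k x)" using elim True mk by simp
      have H2: "Hc Y TT gamma m (k-1) x = Yinf (k-1) x + (\<Sum>i\<in>{m..<k-1}. Dd i (k-1) x)" using elim True mk by simp
      have qq: "q 1 x = 1 - q 0 x" using elim True by simp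
      have spl: "(\<Sum>j\<in>{m..k}. Wf j k x) = Wf m k x + (\<Sum>j\<in>{m<..k}. Wf j k x)"
        using mk by (simp add: sum.atLeast_Suc_atMost atLeastSucAtMost_greaterThanAtMost)
      have bw: "bias m k x = e 1 x - e 0 x" by (simp add: bias_star_def e_def D_def)
      have key: "D x - Wf m k x - v x = (D x - e 1 x) * indicator (Bs m 1) x + (D x - e 0 x) * indicator (Bs m 0) x"
      proof -
        consider "A m x = 0" | "A m x = 1" using binary[OF mK x] by blast
        then show ?thesis
        proof cases
          case 1 then show ?thesis using True
            by (simp add: Wf_def bw v_def q_def[symmetric] qq indicator_def algebra_simps)
        next
          case 2 then show ?thesis using True
            by (simp add: Wf_def bw v_def q_def[symmetric] qq indicator_def algebra_simps)
        qed
      qed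
      have "X1 x = Hca_star M MZ K Z Y A Ycf Yinf m k x - Hc_star M MZ K Z Y A Ycf Yinf m (k - 1) x"
        using True by (simp add: X1_def)
      also have "\<dots> = Hc Y TT gamma m k x - (\<Sum>j\<in>{m..k}. Wf j k x) - Hc Y TT gamma m (k-1) x" by (rule XA[OF x])
      finally have X1x: "X1 x = Hc Y TT gamma m k x - (Wf m k x + (\<Sum>j\<in>{m<..k}. Wf j k x)) - Hc Y TT gamma m (k-1) x"
        by (simp only: spl)
      have Vx: "V x = v x" using True by (simp add: V_def)
      have Rx: "R x = (\<Sum>i\<in>{m..<k}. Dd i k x) - (\<Sum>i\<in>{m..<k-1}. Dd i (k-1) x) - (\<Sum>j\<in>{m<..k}. Wf j k x)
          + (D x - Wf m k x - v x)"
        unfolding R_def using key by linarith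
      show ?thesis unfolding X1x Vx Rx H1 H2 D_def by simp
    next
      case False
      have "(\<Sum>i\<in>{m..<k}. Dd i k x) = 0" "(\<Sum>i\<in>{m..<k-1}. Dd i (k-1) x) = 0" "(\<Sum>j\<in>{m<..k}. Wf j k x) = 0"
        by (auto intro!: sum.neutral simp: Dd_def Wf_def out0[OF False])
      then show ?thesis using False by (simp add: X1_def V_def R_def out0[OF False])
    qed
  qed

  have iE: "integrable M (\<lambda>x. (D x - e a x) * indicator (Bs m a) x)" for a
    using Lm.KL2[OF BM iD] by (simp add: e_def)
  have iDk: "integrable M (\<lambda>x. \<Sum>i\<in>{m..<k}. Dd i k x)" by (intro Bochner_Integration.integrable_sum Dd_int) (use mk in auto)
  have iDk1: "integrable M (\<lambda>x. \<Sum>i\<in>{m..<k-1}. Dd i (k-1) x)" by (intro Bochner_Integration.integrable_sum Dd_int) (use mk in auto)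
  have iW: "integrable M (\<lambda>x. \<Sum>j\<in>{m<..k}. Wf j k x)" by (intro Bochner_Integration.integrable_sum Wf_int) (use mk in auto)
  have iR: "integrable M R" unfolding R_def
    by (intro Bochner_Integration.integrable_add Bochner_Integration.integrable_diff iDk iDk1 iW iE)

  have iV: "integrable M V"
  proof -
    have Veq: "V = (\<lambda>x. q 1 x * e 1 x * indicator (Bs m 1) x + q 0 x * e 0 x * indicator (Bs m 1) x
        + (q 1 x * e 1 x * indicator (Bs m 0) x + q 0 x * e 0 x * indicator (Bs m 0) x))"
      using binary[OF mK] by (auto simp: fun_eq_iff V_def v_def indicator_def algebra_simps)
    show ?thesis unfolding Veq q_def e_def
      by (intro Bochner_Integration.integrable_add Lm.QE1 Lm.QE2 BM SM BS iD)
  qed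

  have HM: "(\<lambda>x. if m < k' then Y k' x - (\<Sum>i\<in>{m..<k'}. gamma i k' x * indicator (Bs i 1) x) else Y m x) \<in> borel_measurable M"
    if "k' \<le> K" for k'
  proof -
    have [measurable]: "Y k' \<in> borel_measurable M" "Y m \<in> borel_measurable M" using Y_int that mK by auto
    have [measurable]: "(\<lambda>x. \<Sum>i\<in>{m..<k'}. gamma i k' x * indicator (Bs i 1) x) \<in> borel_measurable M"
    proof (rule borel_measurable_sum)
      fix i assume "i \<in> {m..<k'}"
      then have [measurable]: "Bs i 1 \<in> sets M" using Bs_M that by auto
      have [measurable]: "(\<lambda>x. gamma i k' x) \<in> borel_measurable M" by (rule gamma_meas)
      show "(\<lambda>x. gamma i k' x * indicator (Bs i 1) x) \<in> borel_measurable M" by measurable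
    qed
    show ?thesis by measurable
  qed
  have WM: "(\<lambda>x. \<Sum>j\<in>{m..k}. Wf j k x) \<in> borel_measurable M"
    by (rule borel_measurable_sum) (use Wf_meas mk in auto)
  have X1meas: "X1 \<in> borel_measurable M"
  proof -
    have "X1 \<in> borel_measurable M \<longleftrightarrow> (\<lambda>x. indicator (Ss m) x * ((if m < k then Y k x - (\<Sum>i\<in>{m..<k}. gamma i k x * indicator (Bs i 1) x) else Y m x)
        - (\<Sum>j\<in>{m..k}. Wf j k x) - (if m < k - 1 then Y (k-1) x - (\<Sum>i\<in>{m..<k-1}. gamma i (k-1) x * indicator (Bs i 1) x) else Y m x))) \<in> borel_measurable M"
    proof (rule measurable_cong)
      fix w assume w: "w \<in> space M"
      have "Hca_star M MZ K Z Y A Ycf Yinf m k w - Hc_star M MZ K Z Y A Ycf Yinf m (k - 1) w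
          = Hc Y TT gamma m k w - (\<Sum>j\<in>{m..k}. Wf j k w) - Hc Y TT gamma m (k-1) w" by (rule XA[OF w])
      also have "\<dots> = (if m < k then Y k w - (\<Sum>i\<in>{m..<k}. gamma i k w * indicator (Bs i 1) w) else Y m w)
        - (\<Sum>j\<in>{m..k}. Wf j k w) - (if m < k - 1 then Y (k-1) w - (\<Sum>i\<in>{m..<k-1}. gamma i (k-1) w * indicator (Bs i 1) w) else Y m w)"
        by (simp only: Hc_space[OF w mk(2)] Hc_space[OF w k1K])
      finally show "X1 w = indicator (Ss m) w * ((if m < k then Y k w - (\<Sum>i\<in>{m..<k}. gamma i k w * indicator (Bs i 1) w) else Y m w)
        - (\<Sum>j\<in>{m..k}. Wf j k w) - (if m < k - 1 then Y (k-1) w - (\<Sum>i\<in>{m..<k-1}. gamma i (k-1) w * indicator (Bs i 1) w) else Y m w))"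
        by (simp only: X1_def)
    qed
    also have "\<dots>"
      by (intro borel_measurable_times borel_measurable_diff borel_measurable_indicator SM HM WM) (use mk in auto)
    finally show ?thesis .
  qed
  have iX1: "integrable M X1"
    by (rule integrable_cong_AE_imp[OF Bochner_Integration.integrable_add[OF iR iV] X1meas])
       (use XR in \<open>eventually_elim, simp\<close>)
  have VmL[measurable]: "V \<in> borel_measurable (Lf m)"
    unfolding V_def[abs_def] v_def q_def e_def qf_def cond_exp_given_def by measurable
  have RmM[measurable]: "R \<in> borel_measurable M" using iR by auto

  have intG: "(\<integral>x. indicator G x * X1 x \<partial>M) = (\<integral>x. indicator G x * V x \<partial>M)" if G: "G \<in> sets (LA m)" for G
  proof -
    have GM[measurable]: "G \<in> sets M" by (rule LAm.setsF_M[OF G])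
    have Cex: "\<exists>C\<in>sets (Lf m). \<forall>x. indicator G x * indicator (Bs m a) x = indicator C x * (indicator (Bs m a) x :: real)" for a
    proof -
      obtain C where C: "C \<in> sets (Lf m)" "G \<inter> {y\<in>space M. A m y = a} = C \<inter> {y\<in>space M. A m y = a}"
        using DEC[OF mK G] by blast
      have "x \<in> Bs m a \<Longrightarrow> x \<in> G \<longleftrightarrow> x \<in> C" for x using C(2) by blast
      then show ?thesis using C(1) by (intro bexI[of _ C]) (auto simp: indicator_def)
    qed
    have zD: "(\<integral>x. indicator G x * Dd i k' x \<partial>M) = 0" if "m \<le> i" "i < k'" "k' \<le> K" for i k'
    proof (cases "i = m")
      case True
      obtain C where C: "C \<in> sets (Lf m)" "\<And>x. indicator G x * indicator (Bs m 1) x = indicator C x * (indicator (Bs m 1) x :: real)"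
        using Cex[of 1] by blast
      have "(\<integral>x. indicator G x * Dd i k' x \<partial>M) = (\<integral>x. indicator C x * Dd i k' x \<partial>M)"
      proof (intro Bochner_Integration.integral_cong refl)
        fix x
        have "indicator G x * Dd i k' x = (Ycf i k' x - Yinf k' x - cond_exp_given M (Lf i) (Bs i 1) (\<lambda>y. Ycf i k' y - Yinf k' y) x) * (indicator G x * indicator (Bs m 1) x)"
          unfolding Dd_def True by (simp only: ac_simps)
        also have "\<dots> = (Ycf i k' x - Yinf k' x - cond_exp_given M (Lf i) (Bs i 1) (\<lambda>y. Ycf i k' y - Yinf k' y) x) * (indicator C x * indicator (Bs m 1) x)"
          by (simp only: C(2))
        also have "\<dots> = indicator C x * Dd i k' x"
          unfolding Dd_def True by (simp only: ac_simps)
        finally show "indicator G x * Dd i k' x = indicator C x * Dd i k' x" .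
      qed
      also have "\<dots> = 0" using Dd_zero[of i k' C] C(1) True that by simp
      finally show ?thesis .
    next
      case False
      then have "G \<in> sets (Lf i)" using LA_L[of m i] G that by auto
      then show ?thesis using Dd_zero that by simp
    qed
    have zW: "(\<integral>x. indicator G x * Wf j k x \<partial>M) = 0" if "m < j" "j \<le> k" for j
    proof -
      have "G \<in> sets (Lf j)" using LA_L[of m j] G that by auto
      then show ?thesis using Wf_zero that mk by simp
    qed
    have zE: "(\<integral>x. indicator G x * ((D x - e a x) * indicator (Bs m a) x) \<partial>M) = 0" for a
    proof -
      obtain C where C: "C \<in> sets (Lf m)" "\<And>x. indicator G x * indicator (Bs m a) x = indicator C x * (indicator (Bs m a) x :: real)"
        using Cex[of a] by blast
      have "(\<integral>x. indicator G x * ((D x - e a x) * indicator (Bs m a) x) \<partial>M) = (\<integral>x. indicator C x * ((D x - e a x) * indicator (Bs m a) x) \<partial>M)"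
      proof (intro Bochner_Integration.integral_cong refl)
        fix x
        have "indicator G x * ((D x - e a x) * indicator (Bs m a) x) = (D x - e a x) * (indicator G x * indicator (Bs m a) x)"
          by (simp only: ac_simps)
        also have "\<dots> = (D x - e a x) * (indicator C x * indicator (Bs m a) x)" by (simp only: C(2))
        also have "\<dots> = indicator C x * ((D x - e a x) * indicator (Bs m a) x)" by (simp only: ac_simps)
        finally show "indicator G x * ((D x - e a x) * indicator (Bs m a) x) = indicator C x * ((D x - e a x) * indicator (Bs m a) x)" .
      qed
      also have "\<dots> = 0" using Lm.KL0[OF BM iD C(1)] by (simp add: e_def)
      finally show ?thesis .
    qed
    define F1 where "F1 = (\<lambda>x. \<Sum>i\<in>{m..<k}. Dd i k x)"
    define F2 where "F2 = (\<lambda>x. \<Sum>i\<in>{m..<k-1}. Dd i (k-1) x)"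
    define F3 where "F3 = (\<lambda>x. \<Sum>j\<in>{m<..k}. Wf j k x)"
    define E where "E a = (\<lambda>x. (D x - e a x) * indicator (Bs m a) x)" for a
    have iF1: "integrable M F1" unfolding F1_def by (rule iDk)
    have iF2: "integrable M F2" unfolding F2_def by (rule iDk1)
    have iF3: "integrable M F3" unfolding F3_def by (rule iW)
    have iEa: "integrable M (E a)" for a unfolding E_def by (rule iE)
    have Req: "R = (\<lambda>x. F1 x - F2 x - F3 x + E 1 x + E 0 x)"
      by (simp add: fun_eq_iff R_def F1_def F2_def F3_def E_def)
    have i12: "integrable M (\<lambda>x. F1 x - F2 x)" using iF1 iF2 by (rule Bochner_Integration.integrable_diff)
    have i123: "integrable M (\<lambda>x. F1 x - F2 x - F3 x)" using i12 iF3 by (rule Bochner_Integration.integrable_diff)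
    have i1234: "integrable M (\<lambda>x. F1 x - F2 x - F3 x + E 1 x)" using i123 iEa by (rule Bochner_Integration.integrable_add)
    have "(\<integral>x. indicator G x * R x \<partial>M) = (\<integral>x. indicator G x * (F1 x - F2 x - F3 x + E 1 x + E 0 x) \<partial>M)"
      by (simp only: Req)
    also have "\<dots> = (\<integral>x. indicator G x * (F1 x - F2 x - F3 x + E 1 x) \<partial>M) + (\<integral>x. indicator G x * E 0 x \<partial>M)"
      by (rule intG_add[OF GM i1234 iEa])
    also have "(\<integral>x. indicator G x * (F1 x - F2 x - F3 x + E 1 x) \<partial>M) = (\<integral>x. indicator G x * (F1 x - F2 x - F3 x) \<partial>M) + (\<integral>x. indicator G x * E 1 x \<partial>M)"
      by (rule intG_add[OF GM i123 iEa])
    also have "(\<integral>x. indicator G x * (F1 x - F2 x - F3 x) \<partial>M) = (\<integral>x. indicator G x * (F1 x - F2 x) \<partial>M) - (\<integral>x. indicator G x * F3 x \<partial>M)"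
      by (rule intG_diff[OF GM i12 iF3])
    also have "(\<integral>x. indicator G x * (F1 x - F2 x) \<partial>M) = (\<integral>x. indicator G x * F1 x \<partial>M) - (\<integral>x. indicator G x * F2 x \<partial>M)"
      by (rule intG_diff[OF GM iF1 iF2])
    also have "(\<integral>x. indicator G x * F1 x \<partial>M) = 0"
    proof -
      have "(\<integral>x. indicator G x * F1 x \<partial>M) = (\<Sum>i\<in>{m..<k}. \<integral>x. indicator G x * Dd i k x \<partial>M)"
        unfolding F1_def by (rule intG_sum[OF GM]) (rule Dd_int, use mk in auto)
      also have "\<dots> = 0" by (intro sum.neutral ballI zD) (use mk in auto)
      finally show ?thesis .
    qed
    also have "(\<integral>x. indicator G x * F2 x \<partial>M) = 0"
    proof -
      have "(\<integral>x. indicator G x * F2 x \<partial>M) = (\<Sum>i\<in>{m..<k-1}. \<integral>x. indicator G x * Dd i (k-1) x \<partial>M)"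
        unfolding F2_def by (rule intG_sum[OF GM]) (rule Dd_int, use mk in auto)
      also have "\<dots> = 0" by (intro sum.neutral ballI zD) (use mk in auto)
      finally show ?thesis .
    qed
    also have "(\<integral>x. indicator G x * F3 x \<partial>M) = 0"
    proof -
      have "(\<integral>x. indicator G x * F3 x \<partial>M) = (\<Sum>j\<in>{m<..k}. \<integral>x. indicator G x * Wf j k x \<partial>M)"
        unfolding F3_def by (rule intG_sum[OF GM]) (rule Wf_int, use mk in auto)
      also have "\<dots> = 0" by (intro sum.neutral ballI zW) (use mk in auto)
      finally show ?thesis .
    qed
    also have "(\<integral>x. indicator G x * E 1 x \<partial>M) = 0" unfolding E_def by (rule zE)
    also have "(\<integral>x. indicator G x * E 0 x \<partial>M) = 0" unfolding E_def by (rule zE)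
    finally have GR: "(\<integral>x. indicator G x * R x \<partial>M) = 0" by simp
    have "(\<integral>x. indicator G x * X1 x \<partial>M) = (\<integral>x. indicator G x * (R x + V x) \<partial>M)"
      by (intro integral_cong_AE) (use XR X1meas iV in \<open>auto simp: borel_measurable_integrable\<close>)
    also have "\<dots> = (\<integral>x. indicator G x * V x \<partial>M)" using intG_add[OF GM iR iV] GR by simp
    finally show ?thesis .
  qed

  have subLA: "subalgebra (LA m) (Lf m)"
    using L_LA[of m] by (simp add: subalgebra_def space_LA space_L)
  have VmLA: "V \<in> borel_measurable (LA m)" by (rule measurable_from_subalg[OF subLA VmL])
  have ch1: "AE x in M. real_cond_exp M (LA m) X1 x = V x"
    by (rule LAm.real_cond_exp_charact) (auto simp: set_lebesgue_integral_def intG iX1 iV VmLA)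
  have ch2: "AE x in M. real_cond_exp M (Lf m) X1 x = V x"
    by (rule Lm.real_cond_exp_charact) (use L_LA[of m] in \<open>auto simp: set_lebesgue_integral_def intG iX1 iV\<close>)
  have SLA[measurable]: "Ss m \<in> sets (LA m)" by (rule Ss_LA[OF mK])
  have p1: "AE x in M. real_cond_exp M (LA m) (indicator (Ss m)) x = indicator (Ss m) x"
    by (rule LAm.real_cond_exp_F_meas) (auto intro: LAm.int_ind)
  have p2: "AE x in M. real_cond_exp M (Lf m) (indicator (Ss m)) x = indicator (Ss m) x"
    by (rule Lm.real_cond_exp_F_meas) (auto intro: Lm.int_ind)
  show ?thesis
    unfolding cond_exp_given_def X1_def[symmetric]
    using ch1 ch2 p1 p2 AE_space by eventually_elim auto
qed



end

theorem lemma1: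
  fixes M :: "'a measure" and MZ :: "'b measure" and K m k :: nat
    and Z :: "nat \<Rightarrow> 'a \<Rightarrow> 'b"
    and Y A Yinf :: "nat \<Rightarrow> 'a \<Rightarrow> real"
    and Ycf :: "nat \<Rightarrow> nat \<Rightarrow> 'a \<Rightarrow> real"
  assumes prob: "prob_space M"
    and Z_meas: "\<And>j. j \<le> K \<Longrightarrow> Z j \<in> M \<rightarrow>\<^sub>M MZ"
    and Y_int: "\<And>j. j \<le> K \<Longrightarrow> integrable M (Y j)"
    and A_meas: "\<And>j. j \<le> K \<Longrightarrow> A j \<in> borel_measurable M"
    and Yinf_int: "\<And>j. j \<le> K \<Longrightarrow> integrable M (Yinf j)"
    and Ycf_int: "\<And>j l. j \<le> K \<Longrightarrow> l \<le> K \<Longrightarrow> integrable M (Ycf j l)"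
    and binary: "\<And>j x. j \<le> K \<Longrightarrow> x \<in> space M \<Longrightarrow> A j x = 0 \<or> A j x = 1"
    and cf_before: "\<And>j l x. j \<le> K \<Longrightarrow> l \<le> j \<Longrightarrow> x \<in> space M \<Longrightarrow> Ycf j l x = Yinf l x"
    and consistency: "AE x in M. \<forall>l\<le>K.
        (T_init K A x < enat l \<longrightarrow> Y l x = Ycf (the_enat (T_init K A x)) l x)
      \<and> (enat l \<le> T_init K A x \<longrightarrow> Y l x = Yinf l x)"
    and positivity: "\<And>j. j \<le> K \<Longrightarrow> AE x in M. enat j \<le> T_init K A x \<longrightarrow>
        0 < cond_exp_given M (L_sigma M MZ Z Y A j) {y \<in> space M. enat j \<le> T_init K A y}
              (indicator {y \<in> space M. A j y = 1}) x
      \<and> cond_exp_given M (L_sigma M MZ Z Y A j) {y \<in> space M. enat j \<le> T_init K A y}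
              (indicator {y \<in> space M. A j y = 1}) x < 1"
    and mk: "m < k" "k \<le> K"
  shows "AE x in M. enat m \<le> T_init K A x \<longrightarrow>
      cond_exp_given M (LA_sigma M MZ Z Y A m) {y \<in> space M. enat m \<le> T_init K A y}
        (\<lambda>y. Hca_star M MZ K Z Y A Ycf Yinf m k y - Hc_star M MZ K Z Y A Ycf Yinf m (k - 1) y) x
    = cond_exp_given M (L_sigma M MZ Z Y A m) {y \<in> space M. enat m \<le> T_init K A y}
        (\<lambda>y. Hca_star M MZ K Z Y A Ycf Yinf m k y - Hc_star M MZ K Z Y A Ycf Yinf m (k - 1) y) x"
proof -
  interpret setting M MZ K Z Y A Yinf Ycf
    by (rule setting.intro[OF prob Z_meas Y_int A_meas Yinf_int Ycf_int binary consistency])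
  show ?thesis by (rule main[OF mk])
qed

end
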